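(* Let $N=2^n$. For any pixel indices $(j,k)$ and $(j,k+1)$ in $\{1,\dots,N\}^2$, there are at most $6n$ discrete bivariate Haar wavelets $\mathbf{h}$ which are not constant on these indices, i.e. for which $\mathbf{h}_{j,k}\ne\mathbf{h}_{j,k+1}$.
   Context: Haar system: $H^0=\mathbf{1}_{[0,1)}$, $H^1=\mathbf{1}_{[0,1/2)}-\mathbf{1}_{[1/2,1)}$; for $e=(e_1,e_2)\in\{(0,1),(1,0),(1,1)\}$, $H^e(u,v)=H^{e_1}(u)H^{e_2}(v)$ and $H^e_{p,q}(x)=2^pH^e(2^px-q)$ for $p\ge0$, $q\in\mathbb{Z}^2\cap2^p[0,1)^2$. Identifying $\mathbf{X}\in\mathbb{C}^{N\times N}$ with the function on $[0,1)^2$ equal to $NX_{j,k}$ on $[\frac{j-1}{N},\frac jN)\times[\frac{k-1}{N},\frac kN)$, the discrete bivariate Haar wavelets are the images $\mathbf{h}^e_{p,q}$ corresponding to $H^e_{p,q}$ with $0\le p\le n-1$ (together with the constant image they form an orthonormal basis of $\mathbb{C}^{N\times N}$). *)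

theory Defs
  imports Complex_Main
begin

definition haar1 :: "nat \<Rightarrow> real \<Rightarrow> real" where
  "haar1 e t = (if e = 0 then (if 0 \<le> t \<and> t < 1 then 1 else 0)
                else (if 0 \<le> t \<and> t < 1/2 then 1 else if 1/2 \<le> t \<and> t < 1 then -1 else 0))"

definition haar_dirs :: "(nat \<times> nat) set" where
  "haar_dirs = {(0,1), (1,0), (1,1)}"

definition haar2 :: "nat \<times> nat \<Rightarrow> real \<times> real \<Rightarrow> real" where
  "haar2 e x = haar1 (fst e) (fst x) * haar1 (snd e) (snd x)"

definition haar2_pq :: "nat \<times> nat \<Rightarrow> nat \<Rightarrow> nat \<times> nat \<Rightarrow> real \<times> real \<Rightarrow> real" where
  "haar2_pq e p q x = 2 ^ p * haar2 e (2 ^ p * fst x - real (fst q), 2 ^ p * snd x - real (snd q))"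

text \<open>Discrete image (N = 2^n) corresponding to H^e_{p,q}: the function equal to N X_{j,k}
  on the pixel [(j-1)/N, j/N) x [(k-1)/N, k/N); for p \<le> n-1 the function is constant on
  each pixel, so X_{j,k} is 1/N times its value at the pixel corner ((j-1)/N, (k-1)/N).\<close>
definition haar_img :: "nat \<Rightarrow> nat \<times> nat \<Rightarrow> nat \<Rightarrow> nat \<times> nat \<Rightarrow> nat \<Rightarrow> nat \<Rightarrow> real" where
  "haar_img n e p q j k =
     haar2_pq e p q ((real j - 1) / 2 ^ n, (real k - 1) / 2 ^ n) / 2 ^ n"

definition haar_wavelets :: "nat \<Rightarrow> (nat \<Rightarrow> nat \<Rightarrow> real) set" where
  "haar_wavelets n = {haar_img n e p q | e p q.
      e \<in> haar_dirs \<and> p < n \<and> fst q < 2 ^ p \<and> snd q < 2 ^ p}"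

end

theory Submission
  imports Defs
begin

lemma haar1_nz: "haar1 e t \<noteq> 0 \<Longrightarrow> 0 \<le> t \<and> t < 1"
  unfolding haar1_def by (auto split: if_splits)

lemma floor_nat_eq: "0 \<le> t - real (q::nat) \<Longrightarrow> t - real q < 1 \<Longrightarrow> q = nat \<lfloor>t\<rfloor>"
proof -
  assume a: "0 \<le> t - real q" "t - real q < 1"
  have "\<lfloor>t\<rfloor> = int q" using a by (intro floor_unique) auto
  thus ?thesis by simp
qed

lemma img_nz:
  assumes "haar_img n e p q j k \<noteq> 0"
  shows "fst q = nat \<lfloor>2^p * ((real j - 1) / 2 ^ n)\<rfloor> \<and> snd q = nat \<lfloor>2^p * ((real k - 1) / 2 ^ n)\<rfloor>"
proof -
  from assms have "haar1 (fst e) (2^p * ((real j - 1) / 2 ^ n) - real (fst q)) \<noteq> 0"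
    "haar1 (snd e) (2^p * ((real k - 1) / 2 ^ n) - real (snd q)) \<noteq> 0"
    unfolding haar_img_def haar2_pq_def haar2_def by auto
  from this[THEN haar1_nz] show ?thesis using floor_nat_eq by blast
qed

theorem lemma9:
  fixes n j k :: nat
  assumes "1 \<le> j" "j \<le> 2 ^ n" "1 \<le> k" "k + 1 \<le> 2 ^ n"
  shows "card {h \<in> haar_wavelets n. h j k \<noteq> h j (k + 1)} \<le> 6 * n"
proof -
  define f where "f i p = nat \<lfloor>(2::real)^p * ((real i - 1) / 2 ^ n)\<rfloor>" for i :: nat and p :: nat
  define P where "P = (\<Union>p\<in>{..<n}. {(p,(f j p, f k p)), (p,(f j p, f (k+1) p))})"
  define g where "g = (\<lambda>(e,p,q). haar_img n e p q)"
  have sub: "{h \<in> haar_wavelets n. h j k \<noteq> h j (k + 1)} \<subseteq> g ` (haar_dirs \<times> P)"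
  proof
    fix h assume "h \<in> {h \<in> haar_wavelets n. h j k \<noteq> h j (k + 1)}"
    then obtain e p q where h: "h = haar_img n e p q" "e \<in> haar_dirs" "p < n"
      and d: "h j k \<noteq> h j (k+1)" unfolding haar_wavelets_def by auto
    have "haar_img n e p q j k \<noteq> 0 \<or> haar_img n e p q j (k+1) \<noteq> 0" using d h by auto
    hence "q = (f j p, f k p) \<or> q = (f j p, f (k+1) p)"
      using img_nz[of n e p q j k] img_nz[of n e p q j "k+1"] unfolding f_def
      by (metis prod.collapse)
    hence "(p,q) \<in> P" using h(3) unfolding P_def by auto
    thus "h \<in> g ` (haar_dirs \<times> P)" using h unfolding g_def by (auto intro!: image_eqI[of _ _ "(e,p,q)"])
  qed
  have cP: "card P \<le> 2 * n"
  proof -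
    have "card P \<le> (\<Sum>p<n. card {(p,(f j p, f k p)), (p,(f j p, f (k+1) p))})"
      unfolding P_def by (rule card_UN_le) simp
    also have "\<dots> \<le> (\<Sum>p<n. 2)" by (intro sum_mono) (simp add: card_insert_le_m1)
    finally show ?thesis by simp
  qed
  have fP: "finite P" unfolding P_def by simp
  have cD: "card haar_dirs = 3" unfolding haar_dirs_def by simp
  have "card {h \<in> haar_wavelets n. h j k \<noteq> h j (k + 1)} \<le> card (g ` (haar_dirs \<times> P))"
    using sub fP by (intro card_mono) (auto simp: haar_dirs_def)
  also have "\<dots> \<le> card (haar_dirs \<times> P)" by (rule card_image_le) (use fP in \<open>simp add: haar_dirs_def\<close>)
  also have "\<dots> = 3 * card P" using cD by (simp add: card_cartesian_product)
  also have "\<dots> \<le> 6 * n" using cP by simp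
  finally show ?thesis .
qed

end
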